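(* Let $\mathcal{H}$ be a $d$-dimensional Hilbert space with fixed orthonormal basis $\{|i\rangle\}_{i=0}^{d-1}$. The logarithmic coherence number $\mathcal{L}_C$ on density operators on $\mathcal{H}$ satisfies: (C1) $\mathcal{L}_C(\rho)\ge 0$ for all states $\rho$, and $\mathcal{L}_C(\rho)=0$ if and only if $\rho$ is incoherent; (C2) $\mathcal{L}_C(\Lambda(\rho))\le\mathcal{L}_C(\rho)$ for every incoherent operation $\Lambda$ and every state $\rho$; (C3) for every incoherent operation with incoherent Kraus operators $\{K_n\}$ and every state $\rho$, $\sum_n q_n\mathcal{L}_C(\rho_n)\le\mathcal{L}_C(\rho)$, where $q_n=\mathrm{Tr}(K_n\rho K_n^\dagger)$ and $\rho_n=K_n\rho K_n^\dagger/q_n$ (sum over $n$ with $q_n>0$); (C4) $\mathcal{L}_C\big(\sum_i p_i\rho_i\big)\le\sum_i p_i\mathcal{L}_C(\rho_i)$ for every ensemble $\{p_i,\rho_i\}$ of states. In particular, $\mathcal{L}_C$ is a coherence measure.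
   Context: A state is incoherent if it is diagonal in the fixed basis $\{|i\rangle\}$; $\mathcal{I}$ denotes the set of incoherent states. An incoherent operation is a completely positive trace-preserving map $\Lambda(\rho)=\sum_n K_n\rho K_n^\dagger$ with $\sum_n K_n^\dagger K_n=I$ and each Kraus operator satisfying $K_n\mathcal{I}K_n^\dagger\subseteq\mathcal{I}$ (up to normalization, i.e. $K_n\delta K_n^\dagger$ is diagonal for every diagonal $\delta$). The coherence rank $R_C(|\psi\rangle)$ of a pure state $|\psi\rangle=\sum_j\lambda_j|j\rangle$ is the number of nonzero coefficients $\lambda_j$. The logarithmic coherence rank is $\mathcal{L}_C(|\psi\rangle)=\log_2 R_C(|\psi\rangle)$, and the logarithmic coherence number of a state $\rho$ is $\mathcal{L}_C(\rho)=\min\sum_i p_i\mathcal{L}_C(|\psi_i\rangle)$, the minimum over all pure-state decompositions $\rho=\sum_i p_i|\psi_i\rangle\langle\psi_i|$. *)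

theory Defs
  imports "HOL-Analysis.Analysis"
begin

text \<open>Hilbert space C^d with d = CARD('d); the fixed basis is indexed by the finite type 'd.
  Operators are complex matrices of type complex^'d^'d.\<close>

type_synonym 'd cmat = "complex^'d^'d"
type_synonym 'd cvec = "complex^'d"

definition adj :: "'d::finite cmat \<Rightarrow> 'd cmat" where
  "adj A = (\<chi> i j. cnj (A $ j $ i))"

definition cinner :: "'d::finite cvec \<Rightarrow> 'd cvec \<Rightarrow> complex" where
  "cinner x y = (\<Sum>i\<in>UNIV. cnj (x $ i) * y $ i)"

definition psd :: "'d::finite cmat \<Rightarrow> bool" where
  "psd A \<longleftrightarrow> (\<forall>x. Im (cinner x (A *v x)) = 0 \<and> Re (cinner x (A *v x)) \<ge> 0)"

definition density :: "'d::finite cmat \<Rightarrow> bool" where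
  "density \<rho> \<longleftrightarrow> psd \<rho> \<and> trace \<rho> = 1"

definition diagonal_mat :: "'d::finite cmat \<Rightarrow> bool" where
  "diagonal_mat A \<longleftrightarrow> (\<forall>i j. i \<noteq> j \<longrightarrow> A $ i $ j = 0)"

definition incoherent :: "'d::finite cmat \<Rightarrow> bool" where
  "incoherent \<rho> \<longleftrightarrow> density \<rho> \<and> diagonal_mat \<rho>"

definition outer :: "'d::finite cvec \<Rightarrow> 'd cmat" where
  "outer \<psi> = (\<chi> i j. \<psi> $ i * cnj (\<psi> $ j))"

definition normalized :: "'d::finite cvec \<Rightarrow> bool" where
  "normalized \<psi> \<longleftrightarrow> (\<Sum>i\<in>UNIV. (cmod (\<psi> $ i))^2) = 1"

definition coherence_rank :: "'d::finite cvec \<Rightarrow> nat" where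
  "coherence_rank \<psi> = card {i. \<psi> $ i \<noteq> 0}"

definition log_coherence_rank :: "'d::finite cvec \<Rightarrow> real" where
  "log_coherence_rank \<psi> = log 2 (real (coherence_rank \<psi>))"

text \<open>A (finite) pure-state decomposition of \<rho>: list of weights p_i > 0 and unit vectors psi_i.\<close>
definition pure_decomp :: "'d::finite cmat \<Rightarrow> (real \<times> 'd cvec) list \<Rightarrow> bool" where
  "pure_decomp \<rho> ds \<longleftrightarrow>
     (\<forall>(p, \<psi>) \<in> set ds. p > 0 \<and> normalized \<psi>) \<and>
     sum_list (map fst ds) = 1 \<and>
     \<rho> = sum_list (map (\<lambda>(p, \<psi>). p *\<^sub>R outer \<psi>) ds)"

definition log_coherence_number :: "'d::finite cmat \<Rightarrow> real" where
  "log_coherence_number \<rho> =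
     Inf {sum_list (map (\<lambda>(p, \<psi>). p * log_coherence_rank \<psi>) ds) | ds. pure_decomp \<rho> ds}"

text \<open>Incoherent Kraus operator: maps every diagonal matrix to a diagonal matrix under K _ K^dagger.\<close>
definition incoherent_kraus :: "'d::finite cmat \<Rightarrow> bool" where
  "incoherent_kraus K \<longleftrightarrow> (\<forall>\<delta>. diagonal_mat \<delta> \<longrightarrow> diagonal_mat (K ** \<delta> ** adj K))"

definition incoherent_operation :: "'d::finite cmat list \<Rightarrow> bool" where
  "incoherent_operation Ks \<longleftrightarrow>
     sum_list (map (\<lambda>K. adj K ** K) Ks) = mat 1 \<and> (\<forall>K \<in> set Ks. incoherent_kraus K)"

definition apply_channel :: "'d::finite cmat list \<Rightarrow> 'd cmat \<Rightarrow> 'd cmat" where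
  "apply_channel Ks \<rho> = sum_list (map (\<lambda>K. K ** \<rho> ** adj K) Ks)"

end

theory Submission imports Defs begin

definition Q :: "'d::finite cmat \<Rightarrow> 'd cvec \<Rightarrow> complex" where
  "Q A x = (\<Sum>i\<in>UNIV. \<Sum>j\<in>UNIV. cnj (x $ i) * A $ i $ j * x $ j)"

lemma Q_eq: "cinner x (A *v x) = Q A x"
  by (simp add: cinner_def Q_def matrix_vector_mult_def sum_distrib_left mult.assoc)

definition ev :: "'d::finite \<Rightarrow> 'd cvec" where "ev k = (\<chi> i. if i = k then 1 else 0)"

lemma ifz1: "(if P then a else 0) * (b::complex) = (if P then a * b else 0)" by simp
lemma ifz2: "(b::complex) * (if P then a else 0) = (if P then b * a else 0)" by simp
lemma cnj_ifz: "cnj (if P then a else 0) = (if P then cnj a else 0)" by simp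

lemma dsum_delta: "(\<Sum>i\<in>(UNIV::'d::finite set). \<Sum>j\<in>(UNIV::'d set). if i = k then (f i j::complex) else 0) = (\<Sum>j\<in>UNIV. f k j)"
proof -
  have "(\<Sum>i\<in>UNIV. \<Sum>j\<in>(UNIV::'d set). if i = k then f i j else 0) = (\<Sum>i\<in>UNIV. if i = k then (\<Sum>j\<in>UNIV. f i j) else 0)"
    by (intro sum.cong refl) auto
  also have "\<dots> = (\<Sum>j\<in>UNIV. f k j)" by (subst sum.delta) auto
  finally show ?thesis .
qed

lemma Q_shift: "Q A (x + c *s ev k) = Q A x + cnj c * (\<Sum>j\<in>UNIV. A $ k $ j * x $ j)
   + c * (\<Sum>i\<in>UNIV. cnj (x $ i) * A $ i $ k) + cnj c * c * A $ k $ k"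
proof -
  have "Q A (x + c *s ev k) = (\<Sum>i\<in>UNIV. \<Sum>j\<in>UNIV. cnj (x $ i) * A $ i $ j * x $ j
     + cnj (x $ i) * A $ i $ j * (if j = k then c else 0) + (if i = k then cnj c else 0) * A $ i $ j * x $ j
     + (if i = k then cnj c else 0) * A $ i $ j * (if j = k then c else 0))"
    unfolding Q_def by (intro sum.cong refl) (simp add: ev_def algebra_simps)
  also have "\<dots> = Q A x + cnj c * (\<Sum>j\<in>UNIV. A $ k $ j * x $ j)
   + c * (\<Sum>i\<in>UNIV. cnj (x $ i) * A $ i $ k) + cnj c * c * A $ k $ k"
    by (simp add: sum.distrib Q_def ifz1 ifz2 sum_distrib_left algebra_simps dsum_delta)
  finally show ?thesis .
qed

lemma Q_ev: "Q A (ev k) = A $ k $ k"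
  by (simp add: Q_def ev_def ifz1 ifz2 cnj_ifz)

lemma psd_Q: "psd A \<Longrightarrow> Im (Q A x) = 0 \<and> Re (Q A x) \<ge> 0"
  by (simp add: psd_def Q_eq)

lemma psd_diag: "psd A \<Longrightarrow> Im (A $ k $ k) = 0 \<and> Re (A $ k $ k) \<ge> 0"
  using psd_Q[of A "ev k"] by (simp add: Q_ev)

lemma psd_herm: assumes "psd A" shows "A $ i $ j = cnj (A $ j $ i)"
proof -
  have e: "Q A (ev j + c *s ev i) = A $ j $ j + cnj c * A $ i $ j + c * A $ j $ i + cnj c * c * A $ i $ i" for c
    unfolding Q_shift Q_ev by (simp add: ev_def ifz1 ifz2 cnj_ifz)
  have 1: "Im (Q A (ev j + 1 *s ev i)) = 0" and 2: "Im (Q A (ev j + \<i> *s ev i)) = 0"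
    using psd_Q[OF assms] by auto
  have di: "Im (A $ i $ i) = 0" "Im (A $ j $ j) = 0" using psd_diag[OF assms] by auto
  from 1 2 di show ?thesis unfolding e by (simp add: complex_eq_iff)
qed

lemma psd_herm': "psd A \<Longrightarrow> cnj (A $ i $ j) = A $ j $ i"
  using psd_herm[of A j i] by simp

lemma Q_two: "Q A (ev j + c *s ev k) = A $ j $ j + cnj c * A $ k $ j + c * A $ j $ k + cnj c * c * A $ k $ k"
  unfolding Q_shift Q_ev by (simp add: ev_def ifz1 ifz2 cnj_ifz)

lemma psd_col: assumes "psd A" "A $ k $ k = 0" shows "A $ j $ k = 0"
proof (rule ccontr)
  define z where "z = A $ j $ k"
  assume "A $ j $ k \<noteq> 0"
  then have z0: "z \<noteq> 0" by (simp add: z_def)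
  have h: "A $ k $ j = cnj z" using psd_herm[OF assms(1), of k j] by (simp add: z_def)
  define t where "t = (Re (A $ j $ j) + 1) / (2 * (cmod z)^2)"
  define c where "c = - complex_of_real t * cnj z"
  have cz: "c * z = - complex_of_real (t * (cmod z)^2)"
  proof -
    have 1: "c * z = - (complex_of_real t * (z * cnj z))" unfolding c_def by (simp add: ac_simps)
    have 2: "z * cnj z = complex_of_real ((cmod z)^2)" by (rule complex_norm_square[symmetric])
    show ?thesis unfolding 1 2 of_real_mult by simp
  qed
  have q: "Q A (ev j + c *s ev k) = A $ j $ j + cnj (c * z) + c * z"
    unfolding Q_two h assms(2) by (simp add: z_def)
  have "t * (cmod z)^2 = (Re (A $ j $ j) + 1) / 2" using z0 by (simp add: t_def)
  then have "Re (Q A (ev j + c *s ev k)) = -1" unfolding q cz by simp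
  with psd_Q[OF assms(1), of "ev j + c *s ev k"] show False by linarith
qed

lemma Q_diff: "Q (A - B) x = Q A x - Q B x"
  by (simp add: Q_def algebra_simps sum_subtractf)

lemma Q_outer: "Q (outer v) x = cnj (\<Sum>j\<in>UNIV. cnj (v $ j) * x $ j) * (\<Sum>j\<in>UNIV. cnj (v $ j) * x $ j)"
  unfolding Q_def cnj_sum sum_product
  by (intro sum.cong refl) (simp add: outer_def)

lemma fld1: "(r::complex) \<noteq> 0 \<Longrightarrow> q + (-(cb)/r) * b + (-b/r)*cb + (-(cb)/r)*(-b/r)*r = q - cb*b/r"
  by (simp add: field_simps)

lemma fld2: "(s::complex) * s = r \<Longrightarrow> s \<noteq> 0 \<Longrightarrow> (cb / s) * (b / s) = cb * b / r"
  by (simp add: field_simps)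

lemma fld3: "(s::complex) * s = r \<Longrightarrow> s \<noteq> 0 \<Longrightarrow> r - (r / s) * (r / s) = 0"
  by (simp add: field_simps)

lemma schur_psd:
  assumes A: "psd A" and a: "A $ k $ k = complex_of_real a" "a > 0"
  defines "v \<equiv> (\<chi> i. A $ i $ k / complex_of_real (sqrt a))"
  shows "psd (A - outer v)"
  unfolding psd_def Q_eq
proof
  fix x
  define b where "b = (\<Sum>j\<in>UNIV. A $ k $ j * x $ j)"
  define c where "c = - b / complex_of_real a"
  have sa: "complex_of_real (sqrt a) * complex_of_real (sqrt a) = complex_of_real a"
  proof -
    have "sqrt a * sqrt a = a" using a(2) by simp
    then show ?thesis by (simp flip: of_real_mult)
  qed
  have s0: "complex_of_real (sqrt a) \<noteq> 0" using a by simp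
  have "(\<Sum>j\<in>UNIV. cnj (v $ j) * x $ j) = (\<Sum>j\<in>UNIV. A $ k $ j * x $ j / complex_of_real (sqrt a))"
    by (intro sum.cong refl) (simp add: v_def psd_herm'[OF A])
  also have "\<dots> = b / complex_of_real (sqrt a)" by (simp add: b_def sum_divide_distrib)
  finally have w: "(\<Sum>j\<in>UNIV. cnj (v $ j) * x $ j) = b / complex_of_real (sqrt a)" .
  have qo: "Q (outer v) x = cnj b * b / complex_of_real a"
    unfolding Q_outer w complex_cnj_divide complex_cnj_complex_of_real by (rule fld2[OF sa s0])
  have cb: "(\<Sum>i\<in>UNIV. cnj (x $ i) * A $ i $ k) = cnj b"
    unfolding b_def cnj_sum by (intro sum.cong refl) (simp add: psd_herm'[OF A])
  have "Q A (x + c *s ev k) = Q A x + cnj c * b + c * cnj b + cnj c * c * complex_of_real a"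
    unfolding Q_shift b_def[symmetric] cb a ..
  also have "\<dots> = Q A x - cnj b * b / complex_of_real a"
    using fld1[of "complex_of_real a" "Q A x" "cnj b" b] a by (simp add: c_def)
  finally have "Q (A - outer v) x = Q A (x + c *s ev k)" unfolding Q_diff qo by simp
  then show "Im (Q (A - outer v) x) = 0 \<and> 0 \<le> Re (Q (A - outer v) x)" using psd_Q[OF A] by simp
qed

lemma outer_nz: "outer v $ i $ i = 0 \<Longrightarrow> v $ i = 0"
  by (simp add: outer_def flip: complex_norm_square)

lemma psd_zero: assumes "psd A" "\<forall>k. A $ k $ k = 0" shows "A = 0"
proof -
  have "A $ j $ k = 0" for j k using psd_col[OF assms(1)] assms(2) by blast
  then show ?thesis by (simp add: vec_eq_iff)
qed

lemma psd_decomp: "psd A \<Longrightarrow> \<exists>vs. A = sum_list (map outer vs) \<and> (\<forall>v\<in>set vs. v \<noteq> 0)"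
proof (induction "card {k. A $ k $ k \<noteq> 0}" arbitrary: A rule: less_induct)
  case less
  show ?case
  proof (cases "\<forall>k. A $ k $ k = 0")
    case True
    then show ?thesis using psd_zero[OF less.prems] by (intro exI[of _ "[]"]) simp
  next
    case False
    then obtain k where k: "A $ k $ k \<noteq> 0" by blast
    define a where "a = Re (A $ k $ k)"
    have ak: "A $ k $ k = complex_of_real a" using psd_diag[OF less.prems, of k] by (simp add: a_def complex_eq_iff)
    have a0: "a > 0" using psd_diag[OF less.prems, of k] k ak by auto
    define v where "v = (\<chi> i. A $ i $ k / complex_of_real (sqrt a))"
    have pB: "psd (A - outer v)" using schur_psd[OF less.prems ak a0] v_def by simp
    have vk: "v $ k \<noteq> 0" using k a0 by (simp add: v_def)
    have sub: "{j. (A - outer v) $ j $ j \<noteq> 0} \<subseteq> {j. A $ j $ j \<noteq> 0} - {k}"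
    proof
      fix j assume j: "j \<in> {j. (A - outer v) $ j $ j \<noteq> 0}"
      have "(A - outer v) $ k $ k = 0"
        using fld3[of "complex_of_real (sqrt a)" "complex_of_real a"] a0 ak
        by (simp add: v_def outer_def flip: of_real_mult)
      moreover have "A $ j $ j \<noteq> 0"
      proof
        assume "A $ j $ j = 0"
        then have "A $ k $ j = 0" using psd_col[OF less.prems] by blast
        then have "v $ j = 0" using psd_herm[OF less.prems, of j k] by (simp add: v_def)
        then show False using j \<open>A $ j $ j = 0\<close> by (simp add: outer_def)
      qed
      ultimately show "j \<in> {j. A $ j $ j \<noteq> 0} - {k}" using j by auto
    qed
    have "card {j. (A - outer v) $ j $ j \<noteq> 0} < card {k. A $ k $ k \<noteq> 0}"
    proof -
      have "card ({j. A $ j $ j \<noteq> 0} - {k}) < card {j. A $ j $ j \<noteq> 0}"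
        by (rule card_Diff1_less) (use k in auto)
      then show ?thesis using card_mono[OF _ sub] by (meson finite le_less_trans)
    qed
    from less.hyps[OF this pB] obtain vs where vs: "A - outer v = sum_list (map outer vs)" "\<forall>v\<in>set vs. v \<noteq> 0" by blast
    show ?thesis
      apply (rule exI[of _ "v # vs"])
      using vs vk by (auto simp: vec_eq_iff) (metis add_diff_cancel_left' diff_add_cancel)
  qed
qed


definition nv :: "'d::finite cvec \<Rightarrow> real" where "nv v = (\<Sum>i\<in>UNIV. (cmod (v $ i))^2)"

lemma trace_outer: "trace (outer v) = complex_of_real (nv v)"
  by (simp add: trace_def outer_def nv_def flip: complex_norm_square)

lemma trace_zero: "trace (0::'d::finite cmat) = 0"
  by (simp add: trace_def)

lemma trace_sum_list: "trace (sum_list (xs :: 'd::finite cmat list)) = sum_list (map trace xs)"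
  by (induction xs) (simp_all add: trace_zero trace_add)

lemma nv_nonneg: "nv v \<ge> 0" by (simp add: nv_def sum_nonneg)

lemma nv_pos: assumes "v \<noteq> 0" shows "nv v > 0"
proof -
  obtain i where i: "v $ i \<noteq> 0" using assms by (auto simp: vec_eq_iff)
  have "(cmod (v $ i))^2 \<le> nv v" unfolding nv_def
    by (rule member_le_sum) auto
  moreover have "(cmod (v $ i))^2 > 0" using i by simp
  ultimately show ?thesis by linarith
qed

lemma nv_scale: "nv (c *\<^sub>R v) = c^2 * nv v"
  by (simp add: nv_def sum_distrib_left power_mult_distrib)

lemma outer_scale: "outer (c *\<^sub>R v) = (c^2) *\<^sub>R outer v"
  unfolding outer_def by (simp add: vec_eq_iff) (simp add: scaleR_conv_of_real power2_eq_square algebra_simps)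

lemma normalized_nv: "normalized v \<longleftrightarrow> nv v = 1"
  by (simp add: normalized_def nv_def)

lemma unit_of: assumes "v \<noteq> 0"
  shows "normalized ((1 / sqrt (nv v)) *\<^sub>R v)" "nv v *\<^sub>R outer ((1 / sqrt (nv v)) *\<^sub>R v) = outer v"
proof -
  have p: "nv v > 0" using nv_pos[OF assms] .
  have e: "(1 / sqrt (nv v))^2 = 1 / nv v" using p by (simp add: power_divide)
  show "normalized ((1 / sqrt (nv v)) *\<^sub>R v)" unfolding normalized_nv nv_scale e using p by simp
  show "nv v *\<^sub>R outer ((1 / sqrt (nv v)) *\<^sub>R v) = outer v" unfolding outer_scale e using p by simp
qed

definition val :: "(real \<times> 'd::finite cvec) list \<Rightarrow> real" where
  "val ds = sum_list (map (\<lambda>(p, \<psi>). p * log_coherence_rank \<psi>) ds)"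

lemma L_def': "log_coherence_number \<rho> = Inf {val ds | ds. pure_decomp \<rho> ds}"
  by (simp add: log_coherence_number_def val_def)

lemma ofr_sum_list: "complex_of_real (sum_list xs) = sum_list (map complex_of_real xs)"
  by (induction xs) auto

lemma decomp_exists: assumes "density \<rho>" shows "\<exists>ds. pure_decomp \<rho> ds"
proof -
  obtain vs where vs: "\<rho> = sum_list (map outer vs)" "\<forall>v\<in>set vs. v \<noteq> 0"
    using psd_decomp assms by (auto simp: density_def)
  define ds where "ds = map (\<lambda>v. (nv v, (1 / sqrt (nv v)) *\<^sub>R v)) vs"
  have 1: "\<forall>(p, \<psi>)\<in>set ds. p > 0 \<and> normalized \<psi>"
    using vs(2) nv_pos unit_of(1) by (auto simp: ds_def)
  have m: "map (\<lambda>(p, \<psi>). p *\<^sub>R outer \<psi>) ds = map outer vs"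
    using vs(2) by (auto simp: ds_def unit_of(2))
  have "trace \<rho> = sum_list (map (\<lambda>v. complex_of_real (nv v)) vs)"
    unfolding vs(1) trace_sum_list by (simp add: trace_outer o_def)
  also have "\<dots> = complex_of_real (sum_list (map fst ds))"
    by (simp add: ds_def o_def ofr_sum_list)
  finally have "sum_list (map fst ds) = 1" using assms by (simp add: density_def)
  then show ?thesis using 1 m vs(1) by (auto simp: pure_decomp_def)
qed

lemma lcr_nonneg: "log_coherence_rank \<psi> \<ge> 0"
  by (cases "coherence_rank \<psi> = 0") (simp_all add: log_coherence_rank_def log_def)

lemma val_nonneg: "\<forall>(p, \<psi>)\<in>set ds. p > 0 \<and> normalized \<psi> \<Longrightarrow> val ds \<ge> 0"
  unfolding val_def by (rule sum_list_nonneg) (auto intro!: mult_nonneg_nonneg lcr_nonneg)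

lemma bdd_L: "bdd_below {val ds | ds. pure_decomp \<rho> ds}"
  by (rule bdd_belowI[of _ 0]) (auto simp: pure_decomp_def intro!: val_nonneg)

lemma L_le: "pure_decomp \<rho> ds \<Longrightarrow> log_coherence_number \<rho> \<le> val ds"
  unfolding L_def' by (rule cInf_lower[OF _ bdd_L]) auto

lemma L_ge: assumes "density \<rho>" "\<And>ds. pure_decomp \<rho> ds \<Longrightarrow> c \<le> val ds"
  shows "c \<le> log_coherence_number \<rho>"
  unfolding L_def' by (rule cInf_greatest) (use decomp_exists[OF assms(1)] assms(2) in auto)

lemma L_nonneg: "density \<rho> \<Longrightarrow> log_coherence_number \<rho> \<ge> 0"
  by (rule L_ge) (auto simp: pure_decomp_def intro!: val_nonneg)

lemma L_approx: assumes "density \<rho>" "e > 0"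
  shows "\<exists>ds. pure_decomp \<rho> ds \<and> val ds < log_coherence_number \<rho> + e"
proof -
  have "Inf {val ds | ds. pure_decomp \<rho> ds} < log_coherence_number \<rho> + e"
    using assms(2) by (simp add: L_def')
  from cInf_lessD[OF _ this] show ?thesis using decomp_exists[OF assms(1)] by auto
qed


lemma sum_list_comp: "(sum_list (xs :: 'd::finite cvec list)) $ i = sum_list (map (\<lambda>x. x $ i) xs)"
  by (induction xs) auto

lemma sum_list_compm: "(sum_list (xs :: 'd::finite cmat list)) $ i $ j = sum_list (map (\<lambda>x. x $ i $ j) xs)"
  by (induction xs) auto

lemma norm_sum_list_le: "cmod (sum_list (map f xs)) \<le> sum_list (map (\<lambda>x. cmod (f x)) xs)"
proof (induction xs)
  case (Cons x xs)
  then show ?case using norm_triangle_ineq[of "f x" "sum_list (map f xs)"] by simp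
qed simp

lemma cmod_le1: assumes "normalized \<psi>" shows "cmod (\<psi> $ a) \<le> 1"
proof -
  have "(cmod (\<psi> $ a))^2 \<le> nv \<psi>" unfolding nv_def by (rule member_le_sum) auto
  then have "(cmod (\<psi> $ a))^2 \<le> 1 ^ 2" using assms by (simp add: normalized_nv)
  then show ?thesis by (rule power2_le_imp_le) simp
qed

lemma lcr_ge1: assumes "a \<noteq> b" "\<psi> $ a \<noteq> 0" "\<psi> $ b \<noteq> 0" shows "log_coherence_rank \<psi> \<ge> 1"
proof -
  have "{a, b} \<subseteq> {i. \<psi> $ i \<noteq> 0}" using assms by auto
  then have "card {a, b} \<le> coherence_rank \<psi>" unfolding coherence_rank_def by (rule card_mono[rotated]) simp
  then have "2 \<le> coherence_rank \<psi>" using assms(1) by simp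
  then show ?thesis unfolding log_coherence_rank_def by simp
qed

lemma entry_scale_outer: "(p *\<^sub>R outer \<psi>) $ a $ b = complex_of_real p * (\<psi> $ a * cnj (\<psi> $ b))"
  by (simp add: outer_def) (simp add: scaleR_conv_of_real)

lemma entry_scale_outer2: "p *\<^sub>R (outer \<psi> $ a $ b) = complex_of_real p * (\<psi> $ a * cnj (\<psi> $ b))"
  by (simp add: outer_def scaleR_conv_of_real)

lemma coherent_L_pos:
  assumes "density \<rho>" "a \<noteq> b" "\<rho> $ a $ b \<noteq> 0"
  shows "log_coherence_number \<rho> > 0"
proof -
  have "cmod (\<rho> $ a $ b) \<le> log_coherence_number \<rho>"
  proof (rule L_ge[OF assms(1)])
    fix ds assume ds: "pure_decomp \<rho> ds"
    have "\<rho> $ a $ b = sum_list (map (\<lambda>(p, \<psi>). complex_of_real p * (\<psi> $ a * cnj (\<psi> $ b))) ds)"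
      using ds unfolding pure_decomp_def
      by (simp add: sum_list_compm o_def case_prod_unfold entry_scale_outer entry_scale_outer2)
    also have "cmod \<dots> \<le> sum_list (map (\<lambda>x. cmod ((\<lambda>(p, \<psi>). complex_of_real p * (\<psi> $ a * cnj (\<psi> $ b))) x)) ds)"
      by (rule norm_sum_list_le)
    also have "\<dots> \<le> val ds" unfolding val_def
    proof (rule sum_list_mono)
      fix x assume x: "x \<in> set ds"
      obtain p \<psi> where xp: "x = (p, \<psi>)" by force
      have p: "p > 0" "normalized \<psi>" using ds x xp by (auto simp: pure_decomp_def)
      have "cmod (\<psi> $ a) * cmod (\<psi> $ b) \<le> log_coherence_rank \<psi>"
      proof (cases "\<psi> $ a \<noteq> 0 \<and> \<psi> $ b \<noteq> 0")
        case True
        have "cmod (\<psi> $ a) * cmod (\<psi> $ b) \<le> 1 * 1"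
          by (rule mult_mono) (use cmod_le1[OF p(2)] in auto)
        then show ?thesis using lcr_ge1[OF assms(2)] True by fastforce
      next
        case False
        then show ?thesis using lcr_nonneg[of \<psi>] by auto
      qed
      then show "cmod ((\<lambda>(p, \<psi>). complex_of_real p * (\<psi> $ a * cnj (\<psi> $ b))) x) \<le> (\<lambda>(p, \<psi>). p * log_coherence_rank \<psi>) x"
        using p(1) by (simp add: xp norm_mult mult_left_mono)
    qed
    finally show "cmod (\<rho> $ a $ b) \<le> val ds" .
  qed
  then show ?thesis using assms(3) by (meson less_le_trans zero_less_norm_iff)
qed

lemma cmod_ev2: "(cmod (ev i $ j))^2 = (if j = i then 1 else 0)"
  by (simp add: ev_def)

lemma normalized_ev: "normalized (ev i)"
  unfolding normalized_def cmod_ev2 by simp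

lemma cr_ev: "coherence_rank (ev i) = 1"
proof -
  have "{j. ev i $ j \<noteq> 0} = {i}" by (auto simp: ev_def)
  then show ?thesis by (simp add: coherence_rank_def)
qed

lemma outer_ev: "outer (ev i) $ a $ b = (if a = i \<and> b = i then 1 else 0)"
  by (simp add: outer_def ev_def)

lemma incoherent_L0: assumes "incoherent \<rho>" shows "log_coherence_number \<rho> = 0"
proof -
  have d: "density \<rho>" and dg: "diagonal_mat \<rho>" using assms by (auto simp: incoherent_def)
  have psd: "psd \<rho>" using d by (simp add: density_def)
  define X where "X = {i. Re (\<rho> $ i $ i) > 0}"
  obtain xs where xs: "set xs = X" "distinct xs" using finite_distinct_list[of X] by auto
  define ds where "ds = map (\<lambda>i. (Re (\<rho> $ i $ i), ev i)) xs"
  have g: "\<forall>(p, \<psi>)\<in>set ds. p > 0 \<and> normalized \<psi>"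
    using xs by (auto simp: ds_def X_def normalized_ev)
  have diagR: "\<rho> $ i $ i = complex_of_real (Re (\<rho> $ i $ i))" for i
    using psd_diag[OF psd, of i] by (simp add: complex_eq_iff)
  have out: "i \<notin> X \<Longrightarrow> \<rho> $ i $ i = 0" for i
    using psd_diag[OF psd, of i] by (simp add: X_def complex_eq_iff)
  have "sum_list (map fst ds) = (\<Sum>i\<in>X. Re (\<rho> $ i $ i))"
    by (simp add: ds_def o_def sum_list_distinct_conv_sum_set xs)
  also have "\<dots> = (\<Sum>i\<in>UNIV. Re (\<rho> $ i $ i))"
    by (rule sum.mono_neutral_left) (use out in auto)
  also have "\<dots> = Re (trace \<rho>)" by (simp add: trace_def)
  also have "\<dots> = 1" using d by (simp add: density_def)
  finally have s1: "sum_list (map fst ds) = 1" .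
  have "sum_list (map (\<lambda>(p, \<psi>). p *\<^sub>R outer \<psi>) ds) = (\<Sum>i\<in>X. Re (\<rho> $ i $ i) *\<^sub>R outer (ev i))"
    by (simp add: ds_def o_def sum_list_distinct_conv_sum_set xs)
  also have "\<dots> = \<rho>"
  proof (simp add: vec_eq_iff outer_ev, intro allI)
    fix a b
    show "(\<Sum>x\<in>X. Re (\<rho> $ x $ x) *\<^sub>R (if a = x \<and> b = x then 1 else 0)) = \<rho> $ a $ b"
    proof (cases "a = b")
      case True
      then show ?thesis using out[of a] diagR[of a] by (auto simp: scaleR_conv_of_real ifz2 sum.delta sum.delta')
    next
      case False
      then have "(\<Sum>x\<in>X. Re (\<rho> $ x $ x) *\<^sub>R (if a = x \<and> b = x then 1 else (0::complex))) = 0"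
        by (intro sum.neutral) auto
      then show ?thesis using dg False by (simp add: diagonal_mat_def)
    qed
  qed
  finally have pd: "pure_decomp \<rho> ds" using g s1 by (simp add: pure_decomp_def)
  have "val ds = 0" by (simp add: val_def ds_def o_def log_coherence_rank_def cr_ev)
  then show ?thesis using L_le[OF pd] L_nonneg[OF d] by linarith
qed


lemma kraus_outer: "K ** outer \<psi> ** adj K = outer (K *v \<psi>)"
proof -
  have "((K ** outer \<psi>) ** adj K) $ a $ b = outer (K *v \<psi>) $ a $ b" for a b
  proof -
    have "((K ** outer \<psi>) ** adj K) $ a $ b = (\<Sum>m\<in>UNIV. \<Sum>l\<in>UNIV. K $ a $ l * \<psi> $ l * (cnj (\<psi> $ m) * cnj (K $ b $ m)))"
      by (simp add: matrix_matrix_mult_def outer_def adj_def sum_distrib_right mult.assoc)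
    also have "\<dots> = (\<Sum>l\<in>UNIV. \<Sum>m\<in>UNIV. K $ a $ l * \<psi> $ l * (cnj (\<psi> $ m) * cnj (K $ b $ m)))"
      by (rule sum.swap)
    also have "\<dots> = outer (K *v \<psi>) $ a $ b"
      by (simp add: outer_def matrix_vector_mult_def cnj_sum sum_product mult.commute)
    finally show ?thesis .
  qed
  then show ?thesis by (simp add: vec_eq_iff)
qed

lemma diag_outer_ev: "diagonal_mat (outer (ev j))"
  by (simp add: diagonal_mat_def outer_ev)

lemma kraus_col: assumes "incoherent_kraus K" "K $ a $ j \<noteq> 0" "K $ b $ j \<noteq> 0" shows "a = b"
proof (rule ccontr)
  assume ab: "a \<noteq> b"
  have "diagonal_mat (outer (K *v ev j))"
    using assms(1) diag_outer_ev[of j] unfolding incoherent_kraus_def kraus_outer[symmetric] by blast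
  then have "(K *v ev j) $ a * cnj ((K *v ev j) $ b) = 0" using ab by (simp add: diagonal_mat_def outer_def)
  moreover have "(K *v ev j) $ i = K $ i $ j" for i
    by (simp add: matrix_vector_mult_def ev_def ifz2 sum.delta')
  ultimately show False using assms(2,3) by simp
qed

lemma kraus_rank: assumes "incoherent_kraus K" shows "coherence_rank (K *v \<psi>) \<le> coherence_rank \<psi>"
proof -
  define f where "f j = (SOME a. K $ a $ j \<noteq> 0)" for j
  have "{a. (K *v \<psi>) $ a \<noteq> 0} \<subseteq> f ` {j. \<psi> $ j \<noteq> 0}"
  proof
    fix a assume "a \<in> {a. (K *v \<psi>) $ a \<noteq> 0}"
    then have "(\<Sum>j\<in>UNIV. K $ a $ j * \<psi> $ j) \<noteq> 0" by (simp add: matrix_vector_mult_def)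
    then obtain j where j: "K $ a $ j * \<psi> $ j \<noteq> 0" by (meson sum.neutral)
    then have "K $ f j $ j \<noteq> 0" unfolding f_def by (metis (mono_tags, lifting) mult_eq_0_iff someI)
    then have "f j = a" using kraus_col[OF assms] j by auto
    then show "a \<in> f ` {j. \<psi> $ j \<noteq> 0}" using j by auto
  qed
  then have "card {a. (K *v \<psi>) $ a \<noteq> 0} \<le> card (f ` {j. \<psi> $ j \<noteq> 0})" by (rule card_mono[rotated]) simp
  also have "\<dots> \<le> card {j. \<psi> $ j \<noteq> 0}" by (rule card_image_le) simp
  finally show ?thesis by (simp add: coherence_rank_def)
qed

lemma cr_scale: "c \<noteq> 0 \<Longrightarrow> coherence_rank (c *\<^sub>R v) = coherence_rank v"
  by (simp add: coherence_rank_def)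

lemma cr_pos: "v \<noteq> 0 \<Longrightarrow> coherence_rank v > 0"
  unfolding coherence_rank_def by (subst card_gt_0_iff) (auto simp: vec_eq_iff)

lemma kraus_lcr: assumes "incoherent_kraus K" "K *v \<psi> \<noteq> 0"
  shows "log_coherence_rank ((1 / sqrt (nv (K *v \<psi>))) *\<^sub>R (K *v \<psi>)) \<le> log_coherence_rank \<psi>"
proof -
  have c: "1 / sqrt (nv (K *v \<psi>)) \<noteq> 0" using nv_pos[OF assms(2)] by simp
  have p: "coherence_rank (K *v \<psi>) > 0" by (rule cr_pos[OF assms(2)])
  show ?thesis unfolding log_coherence_rank_def cr_scale[OF c]
    by (rule log_mono) (use p kraus_rank[OF assms(1), of \<psi>] in auto)
qed


definition mix :: "(real \<times> 'd::finite cvec) list \<Rightarrow> 'd cmat" where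
  "mix ds = sum_list (map (\<lambda>(p, \<psi>). p *\<^sub>R outer \<psi>) ds)"

definition good :: "(real \<times> 'd::finite cvec) list \<Rightarrow> bool" where
  "good ds \<longleftrightarrow> (\<forall>(p, \<psi>)\<in>set ds. p > 0 \<and> normalized \<psi>)"

lemma pure_decomp_alt: "pure_decomp \<rho> ds \<longleftrightarrow> good ds \<and> sum_list (map fst ds) = 1 \<and> \<rho> = mix ds"
  by (simp add: pure_decomp_def good_def mix_def)

lemma sandwich_zero: "K ** (0::'d::finite cmat) ** adj K = 0"
  by (simp add: vec_eq_iff matrix_matrix_mult_def)

lemma sandwich_add: "K ** ((A::'d::finite cmat) + B) ** adj K = K ** A ** adj K + K ** B ** adj K"
proof -
  have r: "(X + Y) ** Z = X ** Z + Y ** Z" for X Y Z :: "'d cmat"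
    by (simp add: vec_eq_iff matrix_matrix_mult_def sum.distrib distrib_right)
  show ?thesis by (simp add: matrix_add_ldistrib r)
qed

lemma sandwich_scale: "K ** ((c::real) *\<^sub>R (A::'d::finite cmat)) ** adj K = c *\<^sub>R (K ** A ** adj K)"
  by (simp add: vec_eq_iff matrix_matrix_mult_def) (simp add: scaleR_conv_of_real sum_distrib_left sum_distrib_right mult.assoc)

lemma mix_Cons: "mix ((p, \<psi>) # ds) = p *\<^sub>R outer \<psi> + mix ds"
  by (simp add: mix_def)

lemma mix_append: "mix (xs @ ys) = mix xs + mix ys"
  by (simp add: mix_def)

lemma val_Cons: "val ((p, \<psi>) # ds) = p * log_coherence_rank \<psi> + val ds"
  by (simp add: val_def)

lemma val_append: "val (xs @ ys) = val xs + val ys"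
  by (simp add: val_def)

lemma good_Cons: "good ((p, \<psi>) # ds) \<longleftrightarrow> p > 0 \<and> normalized \<psi> \<and> good ds"
  by (simp add: good_def)

lemma good_append: "good (xs @ ys) \<longleftrightarrow> good xs \<and> good ys"
  by (auto simp: good_def)

lemma kraus_decomp:
  assumes K: "incoherent_kraus K" and g: "good ds"
  shows "\<exists>us. good us \<and> K ** mix ds ** adj K = mix us
     \<and> sum_list (map fst us) = sum_list (map (\<lambda>(p, \<psi>). p * nv (K *v \<psi>)) ds)
     \<and> val us \<le> sum_list (map (\<lambda>(p, \<psi>). p * nv (K *v \<psi>) * log_coherence_rank \<psi>) ds)"
  using g
proof (induction ds)
  case Nil
  then show ?case by (intro exI[of _ "[]"]) (simp add: mix_def val_def good_def sandwich_zero)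
next
  case (Cons x ds)
  obtain p \<psi> where x: "x = (p, \<psi>)" by force
  have p: "p > 0" "normalized \<psi>" "good ds" using Cons.prems x by (auto simp: good_Cons)
  obtain us where us: "good us" "K ** mix ds ** adj K = mix us"
     "sum_list (map fst us) = sum_list (map (\<lambda>(p, \<psi>). p * nv (K *v \<psi>)) ds)"
     "val us \<le> sum_list (map (\<lambda>(p, \<psi>). p * nv (K *v \<psi>) * log_coherence_rank \<psi>) ds)"
    using Cons.IH[OF p(3)] by blast
  have sw: "K ** mix (x # ds) ** adj K = p *\<^sub>R outer (K *v \<psi>) + mix us"
    unfolding x mix_Cons sandwich_add sandwich_scale kraus_outer us(2) ..
  show ?case
  proof (cases "K *v \<psi> = 0")
    case True
    have "nv (K *v \<psi>) = 0" using True by (simp add: nv_def)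
    moreover have "outer (K *v \<psi>) = 0" using True by (simp add: outer_def vec_eq_iff)
    ultimately show ?thesis using us sw by (intro exI[of _ us]) (simp add: x)
  next
    case False
    define w where "w = (1 / sqrt (nv (K *v \<psi>))) *\<^sub>R (K *v \<psi>)"
    have n: "nv (K *v \<psi>) > 0" using nv_pos[OF False] .
    have o: "(p * nv (K *v \<psi>)) *\<^sub>R outer w = p *\<^sub>R outer (K *v \<psi>)"
      using unit_of(2)[OF False] by (metis scaleR_scaleR w_def)
    have l: "log_coherence_rank w \<le> log_coherence_rank \<psi>" using kraus_lcr[OF K False] by (simp add: w_def)
    have m: "(p * nv (K *v \<psi>)) * log_coherence_rank w \<le> (p * nv (K *v \<psi>)) * log_coherence_rank \<psi>"
      by (rule mult_left_mono[OF l]) (use p n in simp)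
    have "good ((p * nv (K *v \<psi>), w) # us)" using us(1) p n unit_of(1)[OF False] by (simp add: good_Cons w_def)
    moreover have "K ** mix (x # ds) ** adj K = mix ((p * nv (K *v \<psi>), w) # us)"
      unfolding sw mix_Cons o ..
    moreover have "sum_list (map fst ((p * nv (K *v \<psi>), w) # us)) = sum_list (map (\<lambda>(p, \<psi>). p * nv (K *v \<psi>)) (x # ds))"
      using us(3) by (simp add: x)
    moreover have "val ((p * nv (K *v \<psi>), w) # us) \<le> sum_list (map (\<lambda>(p, \<psi>). p * nv (K *v \<psi>) * log_coherence_rank \<psi>) (x # ds))"
      using us(4) m by (simp add: x val_Cons)
    ultimately show ?thesis by blast
  qed
qed


lemma trace_mix: "good us \<Longrightarrow> trace (mix us) = complex_of_real (sum_list (map fst us))"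
proof (induction us)
  case Nil then show ?case by (simp add: mix_def trace_zero)
next
  case (Cons x us)
  obtain w \<phi> where x: "x = (w, \<phi>)" by force
  have "nv \<phi> = 1" "good us" using Cons.prems x by (auto simp: good_Cons normalized_nv)
  moreover have "trace (w *\<^sub>R outer \<phi>) = complex_of_real w * trace (outer \<phi>)"
    by (simp add: trace_def) (simp add: scaleR_conv_of_real sum_distrib_left)
  ultimately show ?case using Cons.IH by (simp add: x mix_Cons trace_add trace_outer)
qed

lemma mix_scale: "mix (map (\<lambda>(w, \<phi>). (c * w, \<phi>)) us) = c *\<^sub>R mix us"
  by (induction us) (auto simp: mix_def scaleR_add_right)

lemma val_scale: "val (map (\<lambda>(w, \<phi>). (c * w, \<phi>)) us) = c * val us"
  by (induction us) (auto simp: val_def algebra_simps)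

lemma fst_scale: "sum_list (map fst (map (\<lambda>(w, \<phi>). (c * w, \<phi>)) us)) = c * sum_list (map fst (us :: (real \<times> 'd::finite cvec) list))"
  by (induction us) (auto simp: algebra_simps)

lemma good_scale: "good us \<Longrightarrow> c > 0 \<Longrightarrow> good (map (\<lambda>(w, \<phi>). (c * w, \<phi>)) us)"
  by (auto simp: good_def)

lemma trace_right_sum: "sum_list (map (\<lambda>K. trace (M ** f K)) Ks) = trace ((M::'d::finite cmat) ** sum_list (map f Ks))"
proof (induction Ks)
  case Nil then show ?case by (simp add: trace_def matrix_matrix_mult_def)
next
  case (Cons K Ks) then show ?case by (simp add: matrix_add_ldistrib trace_add)
qed

lemma nv_kraus_trace: "complex_of_real (nv (K *v \<psi>)) = trace (outer \<psi> ** (adj K ** K))"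
proof -
  have "complex_of_real (nv (K *v \<psi>)) = trace (K ** (outer \<psi> ** adj K))"
    by (simp add: trace_outer[symmetric] kraus_outer[symmetric] matrix_mul_assoc)
  also have "\<dots> = trace ((outer \<psi> ** adj K) ** K)" by (rule trace_mul_sym)
  finally show ?thesis by (simp add: matrix_mul_assoc)
qed

lemma kraus_complete: assumes "incoherent_operation Ks" "normalized \<psi>"
  shows "sum_list (map (\<lambda>K. nv (K *v \<psi>)) Ks) = 1"
proof -
  have "complex_of_real (sum_list (map (\<lambda>K. nv (K *v \<psi>)) Ks)) = sum_list (map (\<lambda>K. trace (outer \<psi> ** (adj K ** K))) Ks)"
    by (simp add: ofr_sum_list o_def nv_kraus_trace)
  also have "\<dots> = trace (outer \<psi> ** sum_list (map (\<lambda>K. adj K ** K) Ks))" by (rule trace_right_sum)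
  also have "\<dots> = complex_of_real (nv \<psi>)" using assms(1) by (simp add: incoherent_operation_def trace_outer)
  finally show ?thesis using assms(2) by (simp add: normalized_nv)
qed

lemma channel_decomp:
  assumes K: "\<forall>K\<in>set Ks. incoherent_kraus K" and g: "good ds"
  shows "\<exists>us. good us \<and> apply_channel Ks (mix ds) = mix us
     \<and> sum_list (map fst us) = sum_list (map (\<lambda>(p, \<psi>). p * sum_list (map (\<lambda>K. nv (K *v \<psi>)) Ks)) ds)
     \<and> val us \<le> sum_list (map (\<lambda>(p, \<psi>). p * sum_list (map (\<lambda>K. nv (K *v \<psi>)) Ks) * log_coherence_rank \<psi>) ds)"
  using K
proof (induction Ks)
  case Nil
  have "sum_list (map (\<lambda>(p, \<psi>). 0::real) ds) = 0" by (induction ds) auto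
  then show ?case by (intro exI[of _ "[]"]) (simp add: apply_channel_def mix_def val_def good_def)
next
  case (Cons K Ks)
  obtain us1 where u1: "good us1" "K ** mix ds ** adj K = mix us1"
     "sum_list (map fst us1) = sum_list (map (\<lambda>(p, \<psi>). p * nv (K *v \<psi>)) ds)"
     "val us1 \<le> sum_list (map (\<lambda>(p, \<psi>). p * nv (K *v \<psi>) * log_coherence_rank \<psi>) ds)"
    using kraus_decomp[OF _ g, of K] Cons.prems by auto
  obtain us2 where u2: "good us2" "apply_channel Ks (mix ds) = mix us2"
     "sum_list (map fst us2) = sum_list (map (\<lambda>(p, \<psi>). p * sum_list (map (\<lambda>K. nv (K *v \<psi>)) Ks)) ds)"
     "val us2 \<le> sum_list (map (\<lambda>(p, \<psi>). p * sum_list (map (\<lambda>K. nv (K *v \<psi>)) Ks) * log_coherence_rank \<psi>) ds)"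
    using Cons.IH Cons.prems by auto
  have e1: "sum_list (map (\<lambda>(p, \<psi>). p * sum_list (map (\<lambda>K. nv (K *v \<psi>)) (K # Ks))) ds)
     = sum_list (map (\<lambda>(p, \<psi>). p * nv (K *v \<psi>)) ds) + sum_list (map (\<lambda>(p, \<psi>). p * sum_list (map (\<lambda>K. nv (K *v \<psi>)) Ks)) ds)"
    by (induction ds) (auto simp: algebra_simps)
  have e2: "sum_list (map (\<lambda>(p, \<psi>). p * sum_list (map (\<lambda>K. nv (K *v \<psi>)) (K # Ks)) * log_coherence_rank \<psi>) ds)
     = sum_list (map (\<lambda>(p, \<psi>). p * nv (K *v \<psi>) * log_coherence_rank \<psi>) ds) + sum_list (map (\<lambda>(p, \<psi>). p * sum_list (map (\<lambda>K. nv (K *v \<psi>)) Ks) * log_coherence_rank \<psi>) ds)"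
    by (induction ds) (auto simp: algebra_simps)
  have "apply_channel (K # Ks) (mix ds) = mix (us1 @ us2)"
    using u1(2) u2(2) by (simp add: apply_channel_def mix_append)
  then show ?case using u1 u2 e1 e2
    by (intro exI[of _ "us1 @ us2"]) (simp add: good_append val_append)
qed

lemma sum_list_idx: "sum_list (map f xs) = (\<Sum>i\<in>{..<length xs}. f (xs ! i))"
  by (simp add: sum_list_sum_nth atLeast0LessThan)

lemma sum_swap_list: "(\<Sum>n\<in>N. sum_list (map (g n) ds)) = sum_list (map (\<lambda>x. \<Sum>n\<in>N. g n x) ds)"
  by (induction ds) (auto simp: sum.distrib)


lemma sum_list_times_one: "(\<And>x. x \<in> set ds \<Longrightarrow> h x = 1) \<Longrightarrow> sum_list (map (\<lambda>x. f x * h x) ds) = sum_list (map f ds :: real list)"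
  by (induction ds) auto

lemma C2: assumes "incoherent_operation Ks" "density \<rho>"
  shows "log_coherence_number (apply_channel Ks \<rho>) \<le> log_coherence_number \<rho>"
proof (rule L_ge[OF assms(2)])
  fix ds assume pd: "pure_decomp \<rho> ds"
  then have g: "good ds" and s1: "sum_list (map fst ds) = 1" and r: "\<rho> = mix ds" by (auto simp: pure_decomp_alt)
  have K: "\<forall>K\<in>set Ks. incoherent_kraus K" using assms(1) by (simp add: incoherent_operation_def)
  obtain us where us: "good us" "apply_channel Ks (mix ds) = mix us"
     "sum_list (map fst us) = sum_list (map (\<lambda>(p, \<psi>). p * sum_list (map (\<lambda>K. nv (K *v \<psi>)) Ks)) ds)"
     "val us \<le> sum_list (map (\<lambda>(p, \<psi>). p * sum_list (map (\<lambda>K. nv (K *v \<psi>)) Ks) * log_coherence_rank \<psi>) ds)"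
    using channel_decomp[OF K g] by blast
  have one: "x \<in> set ds \<Longrightarrow> sum_list (map (\<lambda>K. nv (K *v snd x)) Ks) = 1" for x
    using g kraus_complete[OF assms(1)] by (auto simp: good_def)
  have "sum_list (map (\<lambda>(p, \<psi>). p * sum_list (map (\<lambda>K. nv (K *v \<psi>)) Ks)) ds) = sum_list (map fst ds)"
    using sum_list_times_one[of ds "\<lambda>x. sum_list (map (\<lambda>K. nv (K *v snd x)) Ks)" fst] one
    by (simp add: case_prod_unfold)
  then have "sum_list (map fst us) = 1" using us(3) s1 by simp
  then have pd2: "pure_decomp (apply_channel Ks \<rho>) us" using us(1,2) r by (simp add: pure_decomp_alt)
  have "sum_list (map (\<lambda>(p, \<psi>). p * sum_list (map (\<lambda>K. nv (K *v \<psi>)) Ks) * log_coherence_rank \<psi>) ds) = val ds"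
    using sum_list_times_one[of ds "\<lambda>x. sum_list (map (\<lambda>K. nv (K *v snd x)) Ks)" "\<lambda>x. fst x * log_coherence_rank (snd x)"] one
    by (simp add: case_prod_unfold val_def mult_ac)
  then show "log_coherence_number (apply_channel Ks \<rho>) \<le> val ds" using L_le[OF pd2] us(4) by linarith
qed

lemma C3: assumes op: "incoherent_operation Ks" and d: "density \<rho>"
  defines "q \<equiv> (\<lambda>n. Re (trace (Ks ! n ** \<rho> ** adj (Ks ! n))))"
  shows "(\<Sum>n\<in>{n. n < length Ks \<and> q n > 0}.
            q n * log_coherence_number ((1 / q n) *\<^sub>R (Ks ! n ** \<rho> ** adj (Ks ! n)))) \<le> log_coherence_number \<rho>"
proof (rule L_ge[OF d])
  fix ds assume pd: "pure_decomp \<rho> ds"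
  then have g: "good ds" and s1: "sum_list (map fst ds) = 1" and r: "\<rho> = mix ds" by (auto simp: pure_decomp_alt)
  define V where "V n = sum_list (map (\<lambda>(p, \<psi>). p * nv (Ks ! n *v \<psi>) * log_coherence_rank \<psi>) ds)" for n
  have V0: "V n \<ge> 0" for n unfolding V_def
    by (rule sum_list_nonneg) (use g in \<open>auto simp: good_def intro!: mult_nonneg_nonneg nv_nonneg lcr_nonneg\<close>)
  have step: "q n * log_coherence_number ((1 / q n) *\<^sub>R (Ks ! n ** \<rho> ** adj (Ks ! n))) \<le> V n"
    if n: "n < length Ks" "q n > 0" for n
  proof -
    have K: "incoherent_kraus (Ks ! n)" using op n by (simp add: incoherent_operation_def)
    obtain us where us: "good us" "Ks ! n ** mix ds ** adj (Ks ! n) = mix us"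
       "val us \<le> V n"
      using kraus_decomp[OF K g] unfolding V_def by blast
    have qn: "q n = sum_list (map fst us)" unfolding q_def r us(2) trace_mix[OF us(1)] by simp
    define ds' where "ds' = map (\<lambda>(w, \<phi>). ((1 / q n) * w, \<phi>)) us"
    have a: "sum_list (map fst ds') = (1/q n) * sum_list (map fst us)" unfolding ds'_def by (rule fst_scale)
    have b: "mix ds' = (1/q n) *\<^sub>R mix us" unfolding ds'_def by (rule mix_scale)
    have c: "good ds'" unfolding ds'_def by (rule good_scale[OF us(1)]) (use n in simp)
    have "pure_decomp ((1 / q n) *\<^sub>R (Ks ! n ** \<rho> ** adj (Ks ! n))) ds'"
      unfolding pure_decomp_alt using a b c n(2) qn r us(2) by simp
    then have Lle: "log_coherence_number ((1 / q n) *\<^sub>R (Ks ! n ** \<rho> ** adj (Ks ! n))) \<le> (1 / q n) * val us"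
      using L_le val_scale unfolding ds'_def by metis
    have "q n * log_coherence_number ((1 / q n) *\<^sub>R (Ks ! n ** \<rho> ** adj (Ks ! n))) \<le> q n * ((1 / q n) * val us)"
      by (rule mult_left_mono[OF Lle]) (use n in simp)
    also have "\<dots> = val us" using n(2) by simp
    finally show ?thesis using us(3) by linarith
  qed
  have "(\<Sum>n\<in>{n. n < length Ks \<and> q n > 0}. q n * log_coherence_number ((1 / q n) *\<^sub>R (Ks ! n ** \<rho> ** adj (Ks ! n))))
      \<le> (\<Sum>n\<in>{n. n < length Ks \<and> q n > 0}. V n)"
    by (rule sum_mono) (use step in auto)
  also have "\<dots> \<le> (\<Sum>n\<in>{..<length Ks}. V n)"
    by (rule sum_mono2) (use V0 in auto)
  also have "\<dots> = val ds"
  proof -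
    have "(\<Sum>n\<in>{..<length Ks}. V n) = sum_list (map (\<lambda>x. \<Sum>n\<in>{..<length Ks}. (\<lambda>(p, \<psi>). p * nv (Ks ! n *v \<psi>) * log_coherence_rank \<psi>) x) ds)"
      unfolding V_def by (rule sum_swap_list)
    also have "\<dots> = sum_list (map (\<lambda>(p, \<psi>). p * log_coherence_rank \<psi> * sum_list (map (\<lambda>K. nv (K *v \<psi>)) Ks)) ds)"
      by (simp add: case_prod_unfold sum_list_idx[of _ Ks] sum_distrib_left mult_ac)
    also have "\<dots> = val ds"
      using g kraus_complete[OF op] unfolding val_def
      by (intro arg_cong[where f = sum_list] map_cong refl) (auto simp: good_def)
    finally show ?thesis .
  qed
  finally show "(\<Sum>n\<in>{n. n < length Ks \<and> q n > 0}. q n * log_coherence_number ((1 / q n) *\<^sub>R (Ks ! n ** \<rho> ** adj (Ks ! n)))) \<le> val ds" .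
qed


lemma ens_decomp:
  assumes "\<forall>(p, \<sigma>)\<in>set ens. p \<ge> 0 \<and> pure_decomp \<sigma> (D \<sigma>)"
  shows "\<exists>ds. good ds \<and> sum_list (map fst ds) = sum_list (map fst ens)
     \<and> sum_list (map (\<lambda>(p, \<sigma>). p *\<^sub>R \<sigma>) ens) = mix ds
     \<and> val ds = sum_list (map (\<lambda>(p, \<sigma>). p * val (D \<sigma>)) ens)"
  using assms
proof (induction ens)
  case Nil
  then show ?case by (intro exI[of _ "[]"]) (simp add: good_def mix_def val_def)
next
  case (Cons x ens)
  obtain p \<sigma> where x: "x = (p, \<sigma>)" by force
  have p: "p \<ge> 0" "pure_decomp \<sigma> (D \<sigma>)" using Cons.prems x by auto
  obtain ds where ds: "good ds" "sum_list (map fst ds) = sum_list (map fst ens)"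
     "sum_list (map (\<lambda>(p, \<sigma>). p *\<^sub>R \<sigma>) ens) = mix ds"
     "val ds = sum_list (map (\<lambda>(p, \<sigma>). p * val (D \<sigma>)) ens)"
    using Cons.IH Cons.prems by auto
  show ?case
  proof (cases "p = 0")
    case True
    then show ?thesis using ds by (intro exI[of _ ds]) (simp add: x)
  next
    case False
    then have pp: "p > 0" using p(1) by simp
    define es where "es = map (\<lambda>(w, \<phi>). (p * w, \<phi>)) (D \<sigma>)"
    have D: "good (D \<sigma>)" "sum_list (map fst (D \<sigma>)) = 1" "\<sigma> = mix (D \<sigma>)"
      using p(2) by (auto simp: pure_decomp_alt)
    have a: "sum_list (map fst es) = p * 1" unfolding es_def fst_scale D(2) ..
    have b: "mix es = p *\<^sub>R \<sigma>" unfolding es_def mix_scale D(3)[symmetric] ..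
    have c: "good es" unfolding es_def by (rule good_scale[OF D(1) pp])
    have v: "val es = p * val (D \<sigma>)" unfolding es_def by (rule val_scale)
    show ?thesis
      using a b c v ds by (intro exI[of _ "es @ ds"]) (simp add: x good_append mix_append val_append)
  qed
qed

lemma C4: fixes ens :: "(real \<times> 'd::finite cmat) list"
  assumes "\<forall>(p, \<sigma>) \<in> set ens. p \<ge> 0 \<and> density \<sigma>" "sum_list (map fst ens) = 1"
  shows "log_coherence_number (sum_list (map (\<lambda>(p, \<sigma>). p *\<^sub>R \<sigma>) ens))
          \<le> sum_list (map (\<lambda>(p, \<sigma>). p * log_coherence_number \<sigma>) ens)"
proof (rule field_le_epsilon)
  fix e :: real assume e: "e > 0"
  define D where "D (\<sigma>::'d cmat) = (SOME ds. pure_decomp \<sigma> ds \<and> val ds < log_coherence_number \<sigma> + e)" for \<sigma>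
  have Dp: "pure_decomp \<sigma> (D \<sigma>) \<and> val (D \<sigma>) < log_coherence_number \<sigma> + e" if "density \<sigma>" for \<sigma>
    unfolding D_def by (rule someI_ex) (rule L_approx[OF that e])
  obtain ds where ds: "good ds" "sum_list (map fst ds) = sum_list (map fst ens)"
     "sum_list (map (\<lambda>(p, \<sigma>). p *\<^sub>R \<sigma>) ens) = mix ds"
     "val ds = sum_list (map (\<lambda>(p, \<sigma>). p * val (D \<sigma>)) ens)"
    using ens_decomp[of ens D] assms(1) Dp by fastforce
  have "pure_decomp (sum_list (map (\<lambda>(p, \<sigma>). p *\<^sub>R \<sigma>) ens)) ds"
    using ds assms(2) by (simp add: pure_decomp_alt)
  then have "log_coherence_number (sum_list (map (\<lambda>(p, \<sigma>). p *\<^sub>R \<sigma>) ens)) \<le> val ds" by (rule L_le)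
  also have "\<dots> \<le> sum_list (map (\<lambda>x. (\<lambda>(p, \<sigma>). p * log_coherence_number \<sigma>) x + e * fst x) ens)"
    unfolding ds(4)
  proof (rule sum_list_mono)
    fix x assume x: "x \<in> set ens"
    obtain p \<sigma> where xp: "x = (p, \<sigma>)" by force
    have "p \<ge> 0" "density \<sigma>" using assms(1) x xp by auto
    then have "p * val (D \<sigma>) \<le> p * (log_coherence_number \<sigma> + e)"
      using Dp[of \<sigma>] by (intro mult_left_mono) auto
    then show "(\<lambda>(p, \<sigma>). p * val (D \<sigma>)) x \<le> (\<lambda>(p, \<sigma>). p * log_coherence_number \<sigma>) x + e * fst x"
      by (simp add: xp algebra_simps)
  qed
  also have "\<dots> = sum_list (map (\<lambda>(p, \<sigma>). p * log_coherence_number \<sigma>) ens) + e * sum_list (map fst ens)"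
    by (simp add: sum_list_addf sum_list_const_mult)
  finally show "log_coherence_number (sum_list (map (\<lambda>(p, \<sigma>). p *\<^sub>R \<sigma>) ens))
          \<le> sum_list (map (\<lambda>(p, \<sigma>). p * log_coherence_number \<sigma>) ens) + e" using assms(2) by simp
qed

lemma C1: fixes \<rho> :: "'d::finite cmat" assumes "density \<rho>"
  shows "log_coherence_number \<rho> \<ge> 0 \<and> (log_coherence_number \<rho> = 0 \<longleftrightarrow> incoherent \<rho>)"
proof -
  have "log_coherence_number \<rho> = 0 \<Longrightarrow> incoherent \<rho>"
  proof -
    assume L0: "log_coherence_number \<rho> = 0"
    have "diagonal_mat \<rho>" unfolding diagonal_mat_def
    proof (intro allI impI)
      fix i j :: 'd assume "i \<noteq> j"
      show "\<rho> $ i $ j = 0" using coherent_L_pos[OF assms \<open>i \<noteq> j\<close>] L0 by fastforce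
    qed
    then show ?thesis using assms by (simp add: incoherent_def)
  qed
  then show ?thesis using L_nonneg[OF assms] incoherent_L0 by blast
qed

theorem proposition2:
  fixes dummy :: "'d::finite itself"
  shows
   "(\<forall>\<rho> :: 'd cmat. density \<rho> \<longrightarrow>
        log_coherence_number \<rho> \<ge> 0 \<and> (log_coherence_number \<rho> = 0 \<longleftrightarrow> incoherent \<rho>))
    \<and> (\<forall>(Ks :: 'd cmat list) \<rho>. incoherent_operation Ks \<and> density \<rho> \<longrightarrow>
        log_coherence_number (apply_channel Ks \<rho>) \<le> log_coherence_number \<rho>)
    \<and> (\<forall>(Ks :: 'd cmat list) \<rho>. incoherent_operation Ks \<and> density \<rho> \<longrightarrow>
        (let q = (\<lambda>n. Re (trace (Ks ! n ** \<rho> ** adj (Ks ! n)))) in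
         (\<Sum>n\<in>{n. n < length Ks \<and> q n > 0}.
            q n * log_coherence_number ((1 / q n) *\<^sub>R (Ks ! n ** \<rho> ** adj (Ks ! n))))
         \<le> log_coherence_number \<rho>))
    \<and> (\<forall>ens :: (real \<times> 'd cmat) list.
        (\<forall>(p, \<sigma>) \<in> set ens. p \<ge> 0 \<and> density \<sigma>) \<and> sum_list (map fst ens) = 1 \<longrightarrow>
        log_coherence_number (sum_list (map (\<lambda>(p, \<sigma>). p *\<^sub>R \<sigma>) ens))
          \<le> sum_list (map (\<lambda>(p, \<sigma>). p * log_coherence_number \<sigma>) ens))"
  using C1 C2 C3 C4 unfolding Let_def by blast

end
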